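(* For every $n\ge 4$, $w^4(P_n)\ge \lceil n/4\rceil$, where $P_n$ is the path on $n$ vertices.
   Context: All graphs are finite, simple and undirected. For a graph $G$, a permutation $\sigma$ of $V(G)$ is a 2-placement of $G$ if for every edge $ab\in E(G)$, $\sigma(a)\sigma(b)\notin E(G)$. $G^k$ denotes the $k$-th power of $G$ (same vertex set, distinct vertices adjacent iff their distance in $G$ is at most $k$); $\sigma(G)\subseteq G^k$ means that for every edge $ab$ of $G$, $dist_G(\sigma(a),\sigma(b))\le k$. A (surjective) mapping $f:V(G)\to\{1,\dots,p\}$ is a $p$-labeled-packing of $G$ into $G^k$ if there exists a permutation $\sigma$ of $V(G)$ such that $\sigma$ is a 2-placement of $G$, $\sigma(G)\subseteq G^k$, and $f(\sigma(v))=f(v)$ for every vertex $v$. The labeled packing $k$-power number $w^k(G)$ is the maximum $p$ for which $G$ admits a $p$-labeled-packing into $G^k$. *)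

theory Defs
  imports Main
begin

text \<open>A finite simple graph is given by a vertex set V and a symmetric, irreflexive
edge relation E (only edges between vertices of V are considered).\<close>

definition edge_rel :: "'a set \<Rightarrow> ('a \<Rightarrow> 'a \<Rightarrow> bool) \<Rightarrow> ('a \<times> 'a) set" where
  "edge_rel V E = {(a, b). a \<in> V \<and> b \<in> V \<and> E a b}"

definition dist_le :: "'a set \<Rightarrow> ('a \<Rightarrow> 'a \<Rightarrow> bool) \<Rightarrow> nat \<Rightarrow> 'a \<Rightarrow> 'a \<Rightarrow> bool" where
  "dist_le V E k a b \<longleftrightarrow> (\<exists>m\<le>k. (a, b) \<in> (edge_rel V E) ^^ m)"

definition two_placement :: "'a set \<Rightarrow> ('a \<Rightarrow> 'a \<Rightarrow> bool) \<Rightarrow> ('a \<Rightarrow> 'a) \<Rightarrow> bool" where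
  "two_placement V E \<sigma> \<longleftrightarrow> bij_betw \<sigma> V V \<and>
     (\<forall>a\<in>V. \<forall>b\<in>V. E a b \<longrightarrow> \<not> E (\<sigma> a) (\<sigma> b))"

definition image_in_power :: "'a set \<Rightarrow> ('a \<Rightarrow> 'a \<Rightarrow> bool) \<Rightarrow> nat \<Rightarrow> ('a \<Rightarrow> 'a) \<Rightarrow> bool" where
  "image_in_power V E k \<sigma> \<longleftrightarrow> (\<forall>a\<in>V. \<forall>b\<in>V. E a b \<longrightarrow> dist_le V E k (\<sigma> a) (\<sigma> b))"

definition labeled_packing ::
  "'a set \<Rightarrow> ('a \<Rightarrow> 'a \<Rightarrow> bool) \<Rightarrow> nat \<Rightarrow> nat \<Rightarrow> ('a \<Rightarrow> nat) \<Rightarrow> bool" where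
  "labeled_packing V E k p f \<longleftrightarrow> f ` V = {1..p} \<and>
     (\<exists>\<sigma>. two_placement V E \<sigma> \<and> image_in_power V E k \<sigma> \<and> (\<forall>v\<in>V. f (\<sigma> v) = f v))"

definition w_power :: "'a set \<Rightarrow> ('a \<Rightarrow> 'a \<Rightarrow> bool) \<Rightarrow> nat \<Rightarrow> nat" where
  "w_power V E k = (GREATEST p. \<exists>f. labeled_packing V E k p f)"

definition path_V :: "nat \<Rightarrow> nat set" where
  "path_V n = {0..<n}"

definition path_E :: "nat \<Rightarrow> nat \<Rightarrow> nat \<Rightarrow> bool" where
  "path_E n i j \<longleftrightarrow> i < n \<and> j < n \<and> (i + 1 = j \<or> j + 1 = i)"

end

theory Submission
  imports Defs
begin

definition pat :: "nat \<Rightarrow> nat" where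
  "pat j = (if j=0 then 1 else if j=1 then 3 else if j=2 then 0 else 2)"

definition tl4 :: "nat \<Rightarrow> nat \<Rightarrow> nat" where
  "tl4 r j = (if r = 1 then [0,2,4,1,3::nat] ! j
     else if r = 2 then [0,2,4,1,3,5::nat] ! j
     else [0,2,4,6,3,1,5::nat] ! j)"

definition sig :: "nat \<Rightarrow> nat \<Rightarrow> nat" where
  "sig n v = (if n mod 4 = 0 \<or> v < 4*(n div 4 - 1) then 4*(v div 4) + pat (v mod 4)
     else 4*(n div 4 - 1) + tl4 (n mod 4) (v - 4*(n div 4 - 1)))"

definition lab :: "nat \<Rightarrow> nat \<Rightarrow> nat" where
  "lab n v = (if n mod 4 \<noteq> 0 \<and> v > 4*(n div 4 - 1) then n div 4 + 1 else v div 4 + 1)"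

lemma j4: "(j::nat) < 4 \<Longrightarrow> j = 0 \<or> j = 1 \<or> j = 2 \<or> j = 3" by arith
lemma j7: "(j::nat) < 7 \<Longrightarrow> j = 0 \<or> j = 1 \<or> j = 2 \<or> j = 3 \<or> j = 4 \<or> j = 5 \<or> j = 6" by arith

lemma pat_lt: "pat j < 4" by (simp add: pat_def)
lemma pat_inj: "j < 4 \<Longrightarrow> j' < 4 \<Longrightarrow> pat j = pat j' \<Longrightarrow> j = j'"
  by (auto simp: pat_def split: if_splits)

lemma tl4_props:
  assumes "r = 1 \<or> r = 2 \<or> r = 3" "j < 4 + r"
  shows "tl4 r j < 4 + r" "tl4 r j = 0 \<longleftrightarrow> j = 0"
  using assms j7[of j] by (auto simp: tl4_def)

lemma tl4_inj:
  assumes "r = 1 \<or> r = 2 \<or> r = 3" "j < 4 + r" "j' < 4 + r" "tl4 r j = tl4 r j'"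
  shows "j = j'"
  using assms j7[of j] j7[of j'] by (auto simp: tl4_def)

lemma tl4_step:
  assumes "r = 1 \<or> r = 2 \<or> r = 3" "j + 1 < 4 + r"
  shows "2 \<le> \<bar>int (tl4 r (j+1)) - int (tl4 r j)\<bar> \<and> \<bar>int (tl4 r (j+1)) - int (tl4 r j)\<bar> \<le> 4"
  using assms j7[of j] by (auto simp: tl4_def)

lemma pat_step:
  assumes "j < 3"
  shows "2 \<le> \<bar>int (pat (j+1)) - int (pat j)\<bar> \<and> \<bar>int (pat (j+1)) - int (pat j)\<bar> \<le> 4"
  using assms j4[of j] by (auto simp: pat_def)

lemma sig_reg:
  assumes "r < 4" "j < 4" "r = 0 \<or> 4*k+j < 4*(q-1)"
  shows "sig (4*q+r) (4*k+j) = 4*k + pat j"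
  using assms by (simp add: sig_def)

lemma sig_tail:
  assumes "r < 4" "r \<noteq> 0" "q \<ge> 1"
  shows "sig (4*q+r) (4*(q-1)+j) = 4*(q-1) + tl4 r j"
  using assms by (simp add: sig_def)

lemma lab_reg:
  assumes "r < 4" "j < 4" "r = 0 \<or> 4*k+j \<le> 4*(q-1)"
  shows "lab (4*q+r) (4*k+j) = k + 1"
  using assms by (auto simp add: lab_def)

lemma lab_tail:
  assumes "r < 4" "r \<noteq> 0" "q \<ge> 1" "j > 0"
  shows "lab (4*q+r) (4*(q-1)+j) = q + 1"
  using assms by (simp add: lab_def)

lemma decomp:
  fixes v q r :: nat
  assumes "r < 4" "q \<ge> 1" "v < 4*q+r"
  obtains (reg) k j where "v = 4*k+j" "j < 4" "r = 0 \<or> v < 4*(q-1)"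
  | (tail) j where "r \<noteq> 0" "v = 4*(q-1)+j" "j < 4 + r"
proof (cases "r = 0 \<or> v < 4*(q-1)")
  case True
  then show ?thesis using reg[of "v div 4" "v mod 4"] by simp
next
  case False
  then show ?thesis using tail[of "v - 4*(q-1)"] assms by auto
qed

lemma sig_lt:
  assumes "r < 4" "q \<ge> 1" "v < 4*q+r"
  shows "sig (4*q+r) v < 4*q+r"
  using assms(1-3)
proof (cases rule: decomp)
  case (reg k j)
  then have "4*k+j < 4*q+r" using assms by simp
  then have "k < q" using reg by linarith
  then show ?thesis using reg assms sig_reg[of r j k q] pat_lt[of j] by auto
next
  case (tail j)
  then have "r = 1 \<or> r = 2 \<or> r = 3" using assms by arith
  then show ?thesis using tail assms sig_tail[of r q j] tl4_props[of r j] by auto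
qed

lemma sig_inj:
  assumes "r < 4" "q \<ge> 1" "u < 4*q+r" "v < 4*q+r" "sig (4*q+r) u = sig (4*q+r) v"
  shows "u = v"
  using assms(1,2,3)
proof (cases rule: decomp)
  case (reg k j)
  note U = reg
  show ?thesis using assms(1,2,4)
  proof (cases rule: decomp)
    case (reg k' j')
    have e: "4*k + pat j = 4*k' + pat j'" using assms U reg sig_reg by metis
    then have "k = k'" using pat_lt[of j] pat_lt[of j'] by linarith
    then have "pat j = pat j'" using e by simp
    then show ?thesis using pat_inj U reg \<open>k = k'\<close> by simp
  next
    case (tail j')
    have "4*k + pat j = 4*(q-1) + tl4 r j'" using assms U tail sig_reg sig_tail by metis
    moreover have "k + 1 \<le> q - 1" using U tail by linarith
    ultimately show ?thesis using pat_lt[of j] by linarith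
  qed
next
  case (tail j)
  note U = tail
  have r3: "r = 1 \<or> r = 2 \<or> r = 3" using assms U by arith
  show ?thesis using assms(1,2,4)
  proof (cases rule: decomp)
    case (reg k' j')
    have "4*k' + pat j' = 4*(q-1) + tl4 r j" using assms U reg sig_reg sig_tail by metis
    moreover have "k' + 1 \<le> q - 1" using U reg by linarith
    ultimately show ?thesis using pat_lt[of j'] by linarith
  next
    case (tail j')
    have "4*(q-1) + tl4 r j = 4*(q-1) + tl4 r j'" using assms U tail sig_tail by metis
    then show ?thesis using tl4_inj[OF r3] U tail by simp
  qed
qed

lemma sig_step:
  assumes "r < 4" "q \<ge> 1" "a + 1 < 4*q+r"
  shows "2 \<le> \<bar>int (sig (4*q+r) (a+1)) - int (sig (4*q+r) a)\<bar> \<and>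
         \<bar>int (sig (4*q+r) (a+1)) - int (sig (4*q+r) a)\<bar> \<le> 4"
proof -
  have av: "a < 4*q+r" using assms by simp
  show ?thesis using assms(1,2) av
  proof (cases rule: decomp)
    case (reg k j)
    show ?thesis
    proof (cases "j < 3")
      case True
      have r1: "r = 0 \<or> 4*k+(j+1) < 4*(q-1)"
      proof (cases "r = 0")
        case False
        then have "4*k+j < 4*(q-1)" using reg by simp
        then have "k < q - 1" by linarith
        then show ?thesis using True by linarith
      qed simp
      have "sig (4*q+r) a = 4*k + pat j" using reg assms sig_reg by metis
      moreover have "sig (4*q+r) (a+1) = 4*k + pat (j+1)"
        using reg assms sig_reg[of r "j+1" k q] r1 True by simp
      ultimately show ?thesis using pat_step[OF True] by simp
    next
      case False
      then have j3: "j = 3" using reg by simp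
      have sa: "sig (4*q+r) a = 4*k + 2" using reg assms sig_reg j3 by (metis pat_def numeral_eq_iff semiring_norm(84) semiring_norm(86) semiring_norm(88) zero_neq_numeral one_eq_numeral_iff)
      show ?thesis
      proof (cases "r = 0 \<or> 4*(k+1)+0 < 4*(q-1)")
        case True
        have "sig (4*q+r) (a+1) = 4*(k+1) + 1"
          using sig_reg[of r 0 "k+1" q] True assms reg j3 by (simp add: pat_def)
        then show ?thesis using sa by simp
      next
        case F2: False
        then have "r \<noteq> 0" "k + 1 = q - 1" using reg j3 by auto
        then have eq: "a + 1 = 4*(q-1) + 0" using reg j3 by simp
        have "sig (4*q+r) (a+1) = 4*(q-1) + tl4 r 0"
          unfolding eq using sig_tail[of r q 0] assms \<open>r \<noteq> 0\<close> by blast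
        moreover have "tl4 r 0 = 0" by (simp add: tl4_def)
        moreover have "q = k + 2" using \<open>k + 1 = q - 1\<close> by simp
        ultimately show ?thesis using sa by simp
      qed
    qed
  next
    case (tail j)
    have r3: "r = 1 \<or> r = 2 \<or> r = 3" using assms tail by arith
    have "sig (4*q+r) a = 4*(q-1) + tl4 r j" using assms tail sig_tail by metis
    moreover have "sig (4*q+r) (a+1) = 4*(q-1) + tl4 r (j+1)"
      using assms tail sig_tail[of r q "j+1"] by simp
    moreover have "j + 1 < 4 + r" using tail assms by simp
    ultimately show ?thesis using tl4_step[OF r3] by simp
  qed
qed

lemma lab_sig:
  assumes "r < 4" "q \<ge> 1" "v < 4*q+r"
  shows "lab (4*q+r) (sig (4*q+r) v) = lab (4*q+r) v"
  using assms(1-3)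
proof (cases rule: decomp)
  case (reg k j)
  have le: "r = 0 \<or> 4*k+j \<le> 4*(q-1)" "r = 0 \<or> 4*k+pat j \<le> 4*(q-1)"
  proof -
    show "r = 0 \<or> 4*k+j \<le> 4*(q-1)" using reg by auto
    show "r = 0 \<or> 4*k+pat j \<le> 4*(q-1)"
    proof (cases "r = 0")
      case False
      then have "k < q - 1" using reg by linarith
      then show ?thesis using pat_lt[of j] by linarith
    qed simp
  qed
  have "sig (4*q+r) v = 4*k + pat j" using reg assms sig_reg by metis
  then show ?thesis using lab_reg[of r j k q] lab_reg[of r "pat j" k q] le reg assms pat_lt[of j]
    by simp
next
  case (tail j)
  have r3: "r = 1 \<or> r = 2 \<or> r = 3" using assms tail by arith
  have s: "sig (4*q+r) v = 4*(q-1) + tl4 r j" using assms tail sig_tail by metis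
  show ?thesis
  proof (cases "j = 0")
    case True
    then have "tl4 r j = 0" using tl4_props[OF r3] tail by simp
    then show ?thesis using s tail True by simp
  next
    case False
    then have "tl4 r j \<noteq> 0" using tl4_props[OF r3] tail by simp
    then show ?thesis using s tail False lab_tail assms by simp
  qed
qed

lemma path_step_rel:
  assumes "x + 1 < n"
  shows "(x, x+1) \<in> edge_rel (path_V n) (path_E n)" "(x+1, x) \<in> edge_rel (path_V n) (path_E n)"
  using assms by (auto simp: edge_rel_def path_V_def path_E_def)

lemma path_pow_up: "a + d < n \<Longrightarrow> (a, a+d) \<in> edge_rel (path_V n) (path_E n) ^^ d"
proof (induction d)
  case 0 then show ?case by simp
next
  case (Suc d)
  then have "(a, a+d) \<in> edge_rel (path_V n) (path_E n) ^^ d" by simp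
  moreover have "(a+d, a + Suc d) \<in> edge_rel (path_V n) (path_E n)"
    using path_step_rel(1)[of "a+d" n] Suc.prems by simp
  ultimately show ?case by (rule relpow_Suc_I)
qed

lemma path_pow_down: "a + d < n \<Longrightarrow> (a+d, a) \<in> edge_rel (path_V n) (path_E n) ^^ d"
proof (induction d)
  case 0 then show ?case by simp
next
  case (Suc d)
  then have "(a+d, a) \<in> edge_rel (path_V n) (path_E n) ^^ d" by simp
  moreover have "(a + Suc d, a+d) \<in> edge_rel (path_V n) (path_E n)"
    using path_step_rel(2)[of "a+d" n] Suc.prems by simp
  ultimately show ?case by (meson relpow_Suc_I2)
qed

lemma path_dist:
  assumes "a < n" "b < n" "\<bar>int a - int b\<bar> \<le> int k"
  shows "dist_le (path_V n) (path_E n) k a b"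
proof (cases "a \<le> b")
  case True
  have "(a, a + (b-a)) \<in> edge_rel (path_V n) (path_E n) ^^ (b-a)"
    using path_pow_up[of a "b-a" n] True assms by simp
  then show ?thesis unfolding dist_le_def using True assms
    by (intro exI[of _ "b-a"]) auto
next
  case False
  have "(b + (a-b), b) \<in> edge_rel (path_V n) (path_E n) ^^ (a-b)"
    using path_pow_down[of b "a-b" n] False assms by simp
  then show ?thesis unfolding dist_le_def using False assms
    by (intro exI[of _ "a-b"]) auto
qed

lemma lab_image:
  assumes "r < 4" "q \<ge> 1"
  shows "lab (4*q+r) ` {0..<4*q+r} = {1..(4*q+r+3) div 4}"
proof
  have p: "(4*q+r+3) div 4 = (if r = 0 then q else q + 1)" using assms by auto
  show "lab (4*q+r) ` {0..<4*q+r} \<subseteq> {1..(4*q+r+3) div 4}"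
  proof
    fix l assume "l \<in> lab (4*q+r) ` {0..<4*q+r}"
    then obtain v where v: "v < 4*q+r" "l = lab (4*q+r) v" by auto
    show "l \<in> {1..(4*q+r+3) div 4}"
      using assms(1,2) v(1)
    proof (cases rule: decomp)
      case (reg k j)
      have "r = 0 \<or> 4*k+j \<le> 4*(q-1)" using reg by auto
      then have "l = k + 1" using v reg lab_reg assms by metis
      moreover have "k < q" using reg v(1) assms by linarith
      ultimately show ?thesis using p by auto
    next
      case (tail j)
      show ?thesis
      proof (cases "j = 0")
        case True
        then have "l = (q-1) + 1" using v tail lab_reg[of r 0 "q-1" q] assms by simp
        then show ?thesis using p assms by auto
      next
        case False
        then have "l = q + 1" using v tail lab_tail assms by simp
        then show ?thesis using p tail by auto
      qed
    qed
  qed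
  show "{1..(4*q+r+3) div 4} \<subseteq> lab (4*q+r) ` {0..<4*q+r}"
  proof
    fix l assume l: "l \<in> {1..(4*q+r+3) div 4}"
    show "l \<in> lab (4*q+r) ` {0..<4*q+r}"
    proof (cases "l \<le> q")
      case True
      have "l - 1 \<le> q - 1" using True by simp
      then have "lab (4*q+r) (4*(l-1)+0) = (l-1) + 1"
        using lab_reg[of r 0 "l-1" q] assms by simp
      moreover have "4*(l-1)+0 < 4*q+r" using True l by auto
      ultimately show ?thesis using l by (intro image_eqI[of _ _ "4*(l-1)+0"]) auto
    next
      case False
      then have "r \<noteq> 0" "l = q + 1" using l p by (auto split: if_splits)
      have "lab (4*q+r) (4*(q-1)+1) = q + 1"
        using lab_tail[of r q 1] assms \<open>r \<noteq> 0\<close> by simp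
      moreover have "4*(q-1)+1 < 4*q+r" using assms \<open>r \<noteq> 0\<close> by auto
      ultimately show ?thesis using \<open>l = q + 1\<close> by (intro image_eqI[of _ _ "4*(q-1)+1"]) auto
    qed
  qed
qed

lemma main_packing:
  assumes "r < 4" "q \<ge> 1"
  shows "labeled_packing (path_V (4*q+r)) (path_E (4*q+r)) 4 ((4*q+r+3) div 4) (lab (4*q+r))"
proof -
  define n where "n = 4*q+r"
  have V: "path_V n = {0..<n}" by (simp add: path_V_def)
  have img: "sig n ` {0..<n} \<subseteq> {0..<n}" using sig_lt assms unfolding n_def by auto
  have inj: "inj_on (sig n) {0..<n}"
    unfolding inj_on_def n_def using sig_inj[OF assms] by auto
  have bij: "bij_betw (sig n) {0..<n} {0..<n}"
    unfolding bij_betw_def using inj endo_inj_surj[OF _ img inj] by simp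
  have stp: "\<And>a. a + 1 < n \<Longrightarrow> 2 \<le> \<bar>int (sig n (a+1)) - int (sig n a)\<bar> \<and>
         \<bar>int (sig n (a+1)) - int (sig n a)\<bar> \<le> 4"
    unfolding n_def using sig_step[OF assms] by blast
  have edge: "\<And>a b. path_E n a b \<Longrightarrow> 2 \<le> \<bar>int (sig n a) - int (sig n b)\<bar> \<and>
         \<bar>int (sig n a) - int (sig n b)\<bar> \<le> 4"
  proof -
    fix a b assume "path_E n a b"
    then have "(b = a + 1 \<and> a + 1 < n) \<or> (a = b + 1 \<and> b + 1 < n)"
      unfolding path_E_def by auto
    then show "2 \<le> \<bar>int (sig n a) - int (sig n b)\<bar> \<and> \<bar>int (sig n a) - int (sig n b)\<bar> \<le> 4"
    proof
      assume h: "b = a + 1 \<and> a + 1 < n"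
      then show ?thesis using stp[of a] by auto
    next
      assume h: "a = b + 1 \<and> b + 1 < n"
      then show ?thesis using stp[of b] by auto
    qed
  qed
  have tp: "two_placement (path_V n) (path_E n) (sig n)"
    unfolding two_placement_def V
  proof (intro conjI bij ballI impI)
    fix a b assume "a \<in> {0..<n}" "b \<in> {0..<n}" "path_E n a b"
    then have "2 \<le> \<bar>int (sig n a) - int (sig n b)\<bar>" using edge by blast
    then show "\<not> path_E n (sig n a) (sig n b)" unfolding path_E_def by auto
  qed
  have ip: "image_in_power (path_V n) (path_E n) 4 (sig n)"
    unfolding image_in_power_def
  proof (intro ballI impI)
    fix a b assume ab: "a \<in> path_V n" "b \<in> path_V n" "path_E n a b"
    have "sig n a < n" "sig n b < n" using sig_lt[OF assms] ab(1,2) unfolding n_def path_V_def by auto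
    then show "dist_le (path_V n) (path_E n) 4 (sig n a) (sig n b)"
      using path_dist[of "sig n a" n "sig n b" 4] edge[OF ab(3)] by auto
  qed
  have lb: "\<forall>v\<in>path_V n. lab n (sig n v) = lab n v"
    unfolding n_def path_V_def using lab_sig[OF assms] by auto
  show ?thesis
    unfolding labeled_packing_def n_def[symmetric]
    using lab_image[OF assms] tp ip lb V unfolding n_def by blast
qed

theorem corollary1p2:
  fixes n :: nat
  assumes "n \<ge> 4"
  shows "w_power (path_V n) (path_E n) 4 \<ge> (n + 3) div 4"
proof -
  define q where "q = n div 4"
  define r where "r = n mod 4"
  have n: "n = 4*q+r" unfolding q_def r_def by simp
  have qr: "r < 4" "q \<ge> 1" using assms unfolding q_def r_def by auto
  have P: "labeled_packing (path_V n) (path_E n) 4 ((n+3) div 4) (lab n)"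
    using main_packing[OF qr] n by simp
  have bnd: "\<forall>y. (\<exists>f. labeled_packing (path_V n) (path_E n) 4 y f) \<longrightarrow> y \<le> n"
  proof (intro allI impI)
    fix y assume "\<exists>f. labeled_packing (path_V n) (path_E n) 4 y f"
    then obtain f where "f ` path_V n = {1..y}" unfolding labeled_packing_def by blast
    then have "card {1..y} \<le> card (path_V n)" by (metis card_image_le finite_atLeastLessThan path_V_def)
    then show "y \<le> n" by (simp add: path_V_def)
  qed
  show ?thesis unfolding w_power_def
    using Greatest_le_nat[of "\<lambda>p. \<exists>f. labeled_packing (path_V n) (path_E n) 4 p f" "(n+3) div 4" n] P bnd
    by blast
qed

end
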